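(* Let $(S,\le,\to,|\cdot|,\Pr)$ be a closed stochastic well-structured transition system, let $T\subseteq S$ be upward-closed, and let $X_0,X_1,\dots$ be an execution of the system. Let $\tau$ be the first time at which $X_\tau\in T$ or $X_\tau\notin\mathrm{Pred}^*(T)$. Then there is a constant $k$ (independent of $X_0$) such that $\mathbb{E}[\tau]=O(|X_0|^k)$, where the implied constant is also independent of $X_0$.
   Context: A quasi-order is a reflexive, transitive relation. A well-quasi-order (wqo) $\le$ on a set $S$ is a quasi-order such that every infinite sequence $x_0,x_1,\dots$ in $S$ has indices $i<j$ with $x_i\le x_j$. A set $T\subseteq S$ is upward-closed if $x\in T$ and $x\le y$ imply $y\in T$. A well-structured transition system (WSTS) $(S,\le,\to)$ is a set $S$ of configurations with a wqo $\le$ and a binary transition relation $\to$ that is compatible with $\le$: whenever $s\to s'$ and $s\le t$, there exists $t'$ with $t\to t'$ and $s'\le t'$. A stochastic WSTS (SWSTS) $(S,\le,\to,|\cdot|,\Pr)$ is a WSTS together with a function assigning each configuration $s$ a positive weight $|s|$ and a transition probability $\Pr[s\to s']$ to each transition, making an execution $X_0,X_1,\dots$ a Markov chain with $\Pr[X_{i+1}=s'\mid X_i=s]=\Pr[s\to s']$; it is required (polynomial transition probabilities) that for each transition $s\to s'$ there are constants $k_0\ge 0$, $c_0>0$ such that for every configuration $t\ge s$, $\Pr[X_{i+1}\ge s'\mid X_i=t]\ge c_0|t|^{-k_0}$. The SWSTS is closed if $s\to s'$ implies $|s|=|s'|$. $\mathrm{Pred}^*(T)$ is the set of configurations from which some element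 of $T$ is reachable by a finite (possibly empty) sequence of transitions. *)

theory Defs
  imports "HOL-Probability.Probability"
begin

definition quasi_order :: "('a \<Rightarrow> 'a \<Rightarrow> bool) \<Rightarrow> bool" where
  "quasi_order le \<longleftrightarrow> (\<forall>x. le x x) \<and> (\<forall>x y z. le x y \<longrightarrow> le y z \<longrightarrow> le x z)"

definition wqo :: "('a \<Rightarrow> 'a \<Rightarrow> bool) \<Rightarrow> bool" where
  "wqo le \<longleftrightarrow> quasi_order le \<and> (\<forall>f :: nat \<Rightarrow> 'a. \<exists>i j. i < j \<and> le (f i) (f j))"

definition upward_closed :: "('a \<Rightarrow> 'a \<Rightarrow> bool) \<Rightarrow> 'a set \<Rightarrow> bool" where
  "upward_closed le T \<longleftrightarrow> (\<forall>x y. x \<in> T \<longrightarrow> le x y \<longrightarrow> y \<in> T)"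

definition compatible :: "('a \<Rightarrow> 'a \<Rightarrow> bool) \<Rightarrow> ('a \<Rightarrow> 'a \<Rightarrow> bool) \<Rightarrow> bool" where
  "compatible le tr \<longleftrightarrow>
     (\<forall>s s' t. tr s s' \<longrightarrow> le s t \<longrightarrow> (\<exists>t'. tr t t' \<and> le s' t'))"

definition wsts :: "('a \<Rightarrow> 'a \<Rightarrow> bool) \<Rightarrow> ('a \<Rightarrow> 'a \<Rightarrow> bool) \<Rightarrow> bool" where
  "wsts le tr \<longleftrightarrow> wqo le \<and> compatible le tr"

text \<open>Stochastic WSTS: weights are positive integers (sizes); the Markov kernel
  K gives the distribution of the next configuration and only moves along
  transitions; polynomial transition probabilities.\<close>

definition swsts ::
  "('a \<Rightarrow> 'a \<Rightarrow> bool) \<Rightarrow> ('a \<Rightarrow> 'a \<Rightarrow> bool) \<Rightarrow> ('a \<Rightarrow> nat) \<Rightarrow> ('a \<Rightarrow> 'a pmf) \<Rightarrow> bool" where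
  "swsts le tr w K \<longleftrightarrow>
     wsts le tr \<and>
     (\<forall>s. w s > 0) \<and>
     (\<forall>s. set_pmf (K s) \<subseteq> {s'. tr s s'}) \<and>
     (\<forall>s s'. tr s s' \<longrightarrow>
        (\<exists>k0 c0 :: real. k0 \<ge> 0 \<and> c0 > 0 \<and>
           (\<forall>t. le s t \<longrightarrow>
              measure_pmf.prob (K t) {u. le s' u} \<ge> c0 * real (w t) powr (- k0))))"

definition closed_swsts ::
  "('a \<Rightarrow> 'a \<Rightarrow> bool) \<Rightarrow> ('a \<Rightarrow> 'a \<Rightarrow> bool) \<Rightarrow> ('a \<Rightarrow> nat) \<Rightarrow> ('a \<Rightarrow> 'a pmf) \<Rightarrow> bool" where
  "closed_swsts le tr w K \<longleftrightarrow> swsts le tr w K \<and> (\<forall>s s'. tr s s' \<longrightarrow> w s = w s')"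

definition Pred_star :: "('a \<Rightarrow> 'a \<Rightarrow> bool) \<Rightarrow> 'a set \<Rightarrow> 'a set" where
  "Pred_star tr T = {s. \<exists>t\<in>T. tr\<^sup>*\<^sup>* s t}"

text \<open>Distribution of the first n+1 states [X_0, ..., X_n] of an
  execution started in s.\<close>

fun traj :: "('a \<Rightarrow> 'a pmf) \<Rightarrow> nat \<Rightarrow> 'a \<Rightarrow> 'a list pmf" where
  "traj K 0 s = return_pmf [s]"
| "traj K (Suc n) s = bind_pmf (K s) (\<lambda>s'. map_pmf (\<lambda>xs. s # xs) (traj K n s'))"

text \<open>Stopping time: first index \<tau> with X_\<tau> \<in> T or
  X_\<tau> \<notin> Pred*(T). Hence \<tau> > n iff X_0..X_n all lie in
  Pred*(T) - T. Its expectation is given by the tail-sum formula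
  E[\<tau>] = \<Sum>n. Pr[\<tau> > n] (in ennreal, possibly infinite).\<close>

definition tau_gt :: "('a \<Rightarrow> 'a \<Rightarrow> bool) \<Rightarrow> 'a set \<Rightarrow> 'a list \<Rightarrow> bool" where
  "tau_gt tr T xs \<longleftrightarrow> (\<forall>x\<in>set xs. x \<notin> T \<and> x \<in> Pred_star tr T)"

definition expected_tau ::
  "('a \<Rightarrow> 'a \<Rightarrow> bool) \<Rightarrow> ('a \<Rightarrow> 'a pmf) \<Rightarrow> 'a set \<Rightarrow> 'a \<Rightarrow> ennreal" where
  "expected_tau tr K T s =
     (\<Sum>n. ennreal (measure_pmf.prob (traj K n s) {xs. tau_gt tr T xs}))"

end

theory Submission
  imports Defs
begin


lemma prob_bind_pmf: "measure_pmf.prob (bind_pmf M f) A = (\<integral>x. measure_pmf.prob (f x) A \<partial>M)"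
proof -
  have "ennreal (measure_pmf.prob (bind_pmf M f) A) = emeasure (bind_pmf M f) A"
    by (simp add: measure_pmf.emeasure_eq_measure)
  also have "\<dots> = (\<integral>\<^sup>+x. ennreal (measure_pmf.prob (f x) A) \<partial>M)"
    by (subst emeasure_bind_pmf) (simp add: measure_pmf.emeasure_eq_measure)
  also have "\<dots> = ennreal (\<integral>x. measure_pmf.prob (f x) A \<partial>M)"
    by (intro nn_integral_eq_integral measure_pmf.integrable_const_bound[where B=1]) auto
  finally show ?thesis by (simp add: integral_nonneg)
qed

definition Gset :: "('a \<Rightarrow> 'a \<Rightarrow> bool) \<Rightarrow> 'a set \<Rightarrow> 'a set" where
  "Gset tr T = Pred_star tr T - T"

definition ff :: "('a \<Rightarrow> 'a \<Rightarrow> bool) \<Rightarrow> ('a \<Rightarrow> 'a pmf) \<Rightarrow> 'a set \<Rightarrow> nat \<Rightarrow> 'a \<Rightarrow> real" where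
  "ff tr K T n s = measure_pmf.prob (traj K n s) {xs. tau_gt tr T xs}"

lemma ff_nonneg: "0 \<le> ff tr K T n s"
  by (simp add: ff_def)

lemma ff_le1: "ff tr K T n s \<le> 1"
  by (simp add: ff_def)

lemma ff_0: "ff tr K T 0 s = indicator (Gset tr T) s"
  by (auto simp: ff_def tau_gt_def Gset_def indicator_def)

lemma preimage_cons: "(Cons s) -` {xs. tau_gt tr T xs} = (if s \<in> Gset tr T then {xs. tau_gt tr T xs} else {})"
  by (auto simp: tau_gt_def Gset_def)

lemma ff_Suc: "ff tr K T (Suc n) s = indicator (Gset tr T) s * (\<integral>u. ff tr K T n u \<partial>K s)"
  by (cases "s \<in> T"; cases "s \<in> Pred_star tr T") (simp_all add: ff_def prob_bind_pmf tau_gt_def Gset_def)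

lemma ff_integrable: "integrable (measure_pmf M) (ff tr K T n)"
  by (intro measure_pmf.integrable_const_bound[where B=1]) (auto simp: ff_nonneg ff_le1)

lemma ff_notG: "s \<notin> Gset tr T \<Longrightarrow> ff tr K T n s = 0"
  by (cases n) (simp_all add: ff_0 ff_Suc)

lemma int_le_pmf:
  fixes f g :: "'a \<Rightarrow> real"
  assumes "integrable (measure_pmf M) f" "integrable (measure_pmf M) g"
    "\<And>x. x \<in> set_pmf M \<Longrightarrow> f x \<le> g x"
  shows "(\<integral>x. f x \<partial>M) \<le> (\<integral>x. g x \<partial>M)"
  by (intro integral_mono_AE assms) (auto simp: AE_measure_pmf_iff assms)

lemma ff_int_le1: fixes M :: "'a pmf" shows "(\<integral>u. ff tr K T n u \<partial>M) \<le> 1"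
proof -
  have "(\<integral>u. ff tr K T n u \<partial>M) \<le> (\<integral>u. 1 \<partial>M)"
    by (rule int_le_pmf[where g="\<lambda>_. 1"]) (auto simp: ff_le1 ff_integrable)
  then show ?thesis by simp
qed

lemma ff_int_nonneg: fixes M :: "'a pmf" shows "0 \<le> (\<integral>u. ff tr K T n u \<partial>M)"
  by (intro integral_nonneg_AE) (auto simp: ff_nonneg)

lemma ff_Suc_le: "ff tr K T (Suc n) s \<le> ff tr K T n s"
proof (induction n arbitrary: s)
  case 0
  show ?case using ff_int_le1[where n=0 and M="K s" and tr=tr and K=K and T=T]
    by (simp add: ff_Suc ff_0 indicator_def)
next
  case (Suc n)
  have "(\<integral>u. ff tr K T (Suc n) u \<partial>K s) \<le> (\<integral>u. ff tr K T n u \<partial>K s)"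
    by (intro int_le_pmf ff_integrable Suc)
  then show ?case
    by (subst (1 2) ff_Suc) (intro mult_left_mono, auto)
qed

lemma ff_antimono: "n \<le> m \<Longrightarrow> ff tr K T m s \<le> ff tr K T n s"
  by (induct rule: dec_induct) (auto intro: order_trans[OF ff_Suc_le])



lemma ff_mult:
  assumes supp: "\<And>s. set_pmf (K s) \<subseteq> {s'. tr s s'}"
    and cl: "\<And>s s'. tr s s' \<Longrightarrow> w s = w s'"
    and M0: "0 \<le> M" and bnd: "\<And>s'. w s' = W \<Longrightarrow> ff tr K T n s' \<le> M"
  shows "w s = W \<Longrightarrow> ff tr K T (m + n) s \<le> M * ff tr K T m s"
proof (induction m arbitrary: s)
  case 0
  show ?case
  proof (cases "s \<in> Gset tr T")
    case True
    then show ?thesis using bnd[OF 0] by (simp add: ff_0)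
  next
    case False
    then show ?thesis by (simp add: ff_notG)
  qed
next
  case (Suc m)
  have "(\<integral>u. ff tr K T (m + n) u \<partial>K s) \<le> (\<integral>u. M * ff tr K T m u \<partial>K s)"
  proof (rule int_le_pmf)
    fix u assume "u \<in> set_pmf (K s)"
    then have "w u = W" using supp cl Suc.prems by force
    then show "ff tr K T (m + n) u \<le> M * ff tr K T m u" by (rule Suc.IH)
  qed (auto simp: ff_integrable)
  then have "indicator (Gset tr T) s * (\<integral>u. ff tr K T (m + n) u \<partial>K s)
      \<le> indicator (Gset tr T) s * (M * (\<integral>u. ff tr K T m u \<partial>K s))"
    by (intro mult_left_mono) auto
  then show ?case by (simp add: ff_Suc mult.left_commute)
qed

lemma ff_geom:
  assumes supp: "\<And>s. set_pmf (K s) \<subseteq> {s'. tr s s'}"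
    and cl: "\<And>s s'. tr s s' \<Longrightarrow> w s = w s'"
    and q1: "q \<le> 1" and bnd: "\<And>s'. w s' = W \<Longrightarrow> ff tr K T L s' \<le> 1 - q"
  shows "w s = W \<Longrightarrow> ff tr K T (j * L) s \<le> (1 - q) ^ j"
proof (induction j arbitrary: s)
  case 0
  then show ?case by (simp add: ff_le1)
next
  case (Suc j)
  have "ff tr K T (L + j * L) s \<le> (1 - q) ^ j * ff tr K T L s"
    using ff_mult[OF supp cl, where M="(1 - q) ^ j" and W=W and n="j * L" and m=L and T=T and s=s] Suc.IH Suc.prems q1 by auto
  also have "\<dots> \<le> (1 - q) ^ j * (1 - q)"
    by (intro mult_left_mono bnd Suc.prems) (use q1 in auto)
  finally show ?case by (simp add: mult.commute)
qed

lemma div_eq_in_block: "L > 0 \<Longrightarrow> n \<in> {m * L..<m * L + L} \<Longrightarrow> n div L = (m::nat)"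
  by (auto intro: div_nat_eqI simp: algebra_simps)

lemma ff_partial:
  assumes supp: "\<And>s. set_pmf (K s) \<subseteq> {s'. tr s s'}"
    and cl: "\<And>s s'. tr s s' \<Longrightarrow> w s = w s'"
    and q1: "q \<le> 1" and q0: "0 < q" and L0: "0 < L"
    and bnd: "\<And>s'. w s' = w s \<Longrightarrow> ff tr K T L s' \<le> 1 - q"
  shows "(\<Sum>n<N. ff tr K T n s) \<le> real L / q"
proof -
  have pt: "ff tr K T n s \<le> (1 - q) ^ (n div L)" for n
  proof -
    have "ff tr K T n s \<le> ff tr K T ((n div L) * L) s"
      by (rule ff_antimono) (simp add: div_times_less_eq_dividend)
    also have "\<dots> \<le> (1 - q) ^ (n div L)"
      by (rule ff_geom[OF supp cl q1 bnd]) auto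
    finally show ?thesis .
  qed
  have "(\<Sum>n<N. ff tr K T n s) \<le> (\<Sum>n<N * L. ff tr K T n s)"
    by (rule sum_mono2) (use L0 in \<open>auto simp: ff_nonneg\<close>)
  also have "\<dots> \<le> (\<Sum>n<N * L. (1 - q) ^ (n div L))"
    by (intro sum_mono pt)
  also have "\<dots> = (\<Sum>m<N. (\<Sum>n\<in>{m * L..<m * L + L}. (1 - q) ^ (n div L)))"
    by (rule sum.nat_group[symmetric])
  also have "\<dots> = (\<Sum>m<N. real L * (1 - q) ^ m)"
    by (intro sum.cong refl) (simp add: div_eq_in_block[OF L0])
  also have "\<dots> = real L * ((1 - (1 - q) ^ N) / q)"
    using q0 by (simp add: sum_distrib_left[symmetric] sum_gp_strict)
  also have "\<dots> \<le> real L / q"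
    using q0 q1 by (simp add: field_simps)
  finally show ?thesis .
qed

lemma expected_bound:
  assumes "\<And>N. (\<Sum>n<N. ff tr K T n s) \<le> B"
  shows "expected_tau tr K T s \<le> ennreal B"
proof -
  have "expected_tau tr K T s = (SUP N. \<Sum>n<N. ennreal (ff tr K T n s))"
    unfolding expected_tau_def ff_def by (rule suminf_eq_SUP)
  also have "\<dots> \<le> ennreal B"
  proof (rule SUP_least)
    fix N
    have "(\<Sum>n<N. ennreal (ff tr K T n s)) = ennreal (\<Sum>n<N. ff tr K T n s)"
      by (rule sum_ennreal) (simp add: ff_nonneg)
    then show "(\<Sum>n<N. ennreal (ff tr K T n s)) \<le> ennreal B"
      using assms by (simp add: ennreal_leI)
  qed
  finally show ?thesis .
qed



lemma pred_star_up:
  assumes comp: "compatible le tr" and up: "upward_closed le T"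
  shows "upward_closed le (Pred_star tr T)"
proof -
  have key: "tr\<^sup>*\<^sup>* s t \<Longrightarrow> le s s' \<Longrightarrow> \<exists>t'. tr\<^sup>*\<^sup>* s' t' \<and> le t t'" for s t s'
  proof (induction arbitrary: s' rule: converse_rtranclp_induct)
    case base
    then show ?case by blast
  next
    case (step y z)
    obtain s'' where "tr s' s''" "le z s''"
      using comp step.hyps(1) step.prems unfolding compatible_def by blast
    with step.IH obtain t' where "tr\<^sup>*\<^sup>* s'' t'" "le t t'" by blast
    then show ?case using \<open>tr s' s''\<close> by (meson converse_rtranclp_into_rtranclp)
  qed
  show ?thesis unfolding upward_closed_def Pred_star_def
  proof (intro allI impI)
    fix x y assume "x \<in> {s. \<exists>t\<in>T. tr\<^sup>*\<^sup>* s t}" "le x y"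
    then obtain t where "t \<in> T" "tr\<^sup>*\<^sup>* x t" by blast
    with key[OF this(2) \<open>le x y\<close>] obtain t' where "tr\<^sup>*\<^sup>* y t'" "le t t'" by blast
    moreover have "t' \<in> T" using up \<open>t \<in> T\<close> \<open>le t t'\<close> unfolding upward_closed_def by blast
    ultimately show "y \<in> {s. \<exists>t\<in>T. tr\<^sup>*\<^sup>* s t}" by blast
  qed
qed

primrec seqB :: "('a \<Rightarrow> 'a \<Rightarrow> bool) \<Rightarrow> 'a set \<Rightarrow> nat \<Rightarrow> 'a list" where
  "seqB le U 0 = []"
| "seqB le U (Suc n) = (SOME x. x \<in> U \<and> (\<forall>b\<in>set (seqB le U n). \<not> le b x)) # seqB le U n"

lemma finite_basis:
  assumes wq: "wqo le"
  shows "\<exists>B. finite B \<and> B \<subseteq> U \<and> (\<forall>x\<in>U. \<exists>b\<in>B. le b x)"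
proof (rule ccontr)
  assume nb: "\<not> ?thesis"
  have ex: "\<exists>x. x \<in> U \<and> (\<forall>b\<in>set (seqB le U n). \<not> le b x)" if "set (seqB le U n) \<subseteq> U" for n
  proof -
    have "\<not> (\<forall>x\<in>U. \<exists>b\<in>set (seqB le U n). le b x)"
      using nb that by (metis List.finite_set)
    then show ?thesis using that by blast
  qed
  have sub: "set (seqB le U n) \<subseteq> U" for n
  proof (induction n)
    case 0 then show ?case by simp
  next
    case (Suc n)
    show ?case using someI_ex[OF ex[OF Suc]] Suc by simp
  qed
  define g where "g n = hd (seqB le U (Suc n))" for n
  have gprop: "\<forall>b\<in>set (seqB le U n). \<not> le b (g n)" for n
    using someI_ex[OF ex[OF sub[of n]]] by (simp add: g_def)
  have mono: "set (seqB le U n) \<subseteq> set (seqB le U m)" if "n \<le> m" for n m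
    using that by (induction rule: dec_induct) auto
  have gin: "g i \<in> set (seqB le U j)" if "i < j" for i j
    using mono[of "Suc i" j] that by (auto simp: g_def)
  obtain i j where "i < j" "le (g i) (g j)"
    using wq unfolding wqo_def by blast
  then show False using gin[OF \<open>i < j\<close>] gprop[of j] by blast
qed

lemma path_bound:
  assumes supp: "\<And>s. set_pmf (K s) \<subseteq> {s'. tr s s'}"
    and cl: "\<And>s s'. tr s s' \<Longrightarrow> w s = w s'"
    and wpos: "\<And>s. w s > 0"
    and up: "upward_closed le T"
    and Hp: "\<And>s s'. tr s s' \<Longrightarrow> (\<exists>k0 c0 :: real. k0 \<ge> 0 \<and> c0 > 0 \<and>
           (\<forall>t. le s t \<longrightarrow>
              measure_pmf.prob (K t) {u. le s' u} \<ge> c0 * real (w t) powr (- k0)))"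
    and path: "tr\<^sup>*\<^sup>* p t" and tT: "t \<in> T"
  shows "\<exists>n (c::real) (k::real). c > 0 \<and> k \<ge> 0 \<and>
           (\<forall>s. le p s \<longrightarrow> ff tr K T n s \<le> 1 - c * real (w s) powr (- k))"
  using path
proof (induction rule: converse_rtranclp_induct)
  case base
  have "ff tr K T 0 s \<le> 1 - 1 * real (w s) powr (- 0)" if "le t s" for s
  proof -
    have "s \<in> T" using up tT that unfolding upward_closed_def by blast
    then have "s \<notin> Gset tr T" by (simp add: Gset_def)
    then show ?thesis using wpos[of s] by (simp add: ff_notG)
  qed
  then show ?case by (intro exI[of _ 0] exI[of _ 1] exI[of _ 0]) auto
next
  case (step y z)
  obtain n c k where c0: "c > 0" "k \<ge> 0"
    and bz: "\<And>s. le z s \<Longrightarrow> ff tr K T n s \<le> 1 - c * real (w s) powr (- k)"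
    using step.IH by blast
  obtain k0 c0 :: real where h: "k0 \<ge> 0" "c0 > 0"
    "\<And>t. le y t \<Longrightarrow> measure_pmf.prob (K t) {u. le z u} \<ge> c0 * real (w t) powr (- k0)"
    using Hp[OF step.hyps(1)] by blast
  have "ff tr K T (Suc n) s \<le> 1 - (c * c0) * real (w s) powr (- (k + k0))" if ys: "le y s" for s
  proof -
    define W where "W = real (w s)"
    have W0: "W > 0" using wpos[of s] by (simp add: W_def)
    define a where "a = c * W powr (- k)"
    have a0: "a \<ge> 0" using c0 by (simp add: a_def)
    have "(\<integral>u. ff tr K T n u \<partial>K s) \<le> (\<integral>u. 1 - a * indicator {u. le z u} u \<partial>K s)"
    proof (rule int_le_pmf)
      fix u assume "u \<in> set_pmf (K s)"
      then have wu: "w u = w s" using supp cl by force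
      show "ff tr K T n u \<le> 1 - a * indicator {u. le z u} u"
        using bz[of u] wu ff_le1[of tr K T n u] by (auto simp: a_def W_def indicator_def)
    qed (use a0 in \<open>auto simp: ff_integrable abs_le_iff indicator_def intro!: measure_pmf.integrable_const_bound[where B="1 + a"]\<close>)
    also have "\<dots> = 1 - a * measure_pmf.prob (K s) {u. le z u}"
    proof -
      have i1: "integrable (measure_pmf (K s)) (\<lambda>u. a * indicator {u. le z u} u)"
        by (intro measure_pmf.integrable_const_bound[where B=a]) (use a0 in \<open>auto simp: indicator_def\<close>)
      have "(\<integral>u. 1 - a * indicator {u. le z u} u \<partial>K s)
          = (\<integral>u. 1 \<partial>K s) - (\<integral>u. a * indicator {u. le z u} u \<partial>K s)"
        by (rule Bochner_Integration.integral_diff[OF measure_pmf.integrable_const i1])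
      also have "\<dots> = 1 - a * measure_pmf.prob (K s) {u. le z u}"
        by (simp add: integral_mult_right_zero)
      finally show ?thesis .
    qed
    also have "\<dots> \<le> 1 - a * (c0 * W powr (- k0))"
      using h(3)[OF ys] a0 by (simp add: W_def mult_left_mono)
    also have "\<dots> = 1 - (c * c0) * W powr (- (k + k0))"
      using powr_add[of W "- k0" "- k"] by (simp add: a_def algebra_simps)
    finally have I: "(\<integral>u. ff tr K T n u \<partial>K s) \<le> 1 - (c * c0) * W powr (- (k + k0))" .
    have "ff tr K T (Suc n) s \<le> (\<integral>u. ff tr K T n u \<partial>K s)"
      using ff_int_nonneg[where M="K s" and tr=tr and K=K and T=T and n=n]
      by (simp add: ff_Suc indicator_def mult_le_cancel_right1)
    then show ?thesis using I by (simp add: W_def)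
  qed
  then show ?case using c0 h by (intro exI[of _ "Suc n"] exI[of _ "c * c0"] exI[of _ "k + k0"]) auto
qed



lemma powr_anti_exp:
  assumes "1 \<le> (W::real)" "k \<le> k'"
  shows "W powr (- k') \<le> W powr (- k)"
  using assms by (intro powr_mono) auto

lemma combine:
  assumes fin: "finite B" and wpos: "\<And>s. w s > 0"
    and hb: "\<forall>b\<in>B. \<exists>n (c::real) (k::real). c > 0 \<and> k \<ge> 0 \<and>
           (\<forall>s. le b s \<longrightarrow> ff tr K T n s \<le> 1 - c * real (w s) powr (- k))"
  shows "\<exists>L (c::real) (k::real). L > 0 \<and> c > 0 \<and> c \<le> 1 \<and> k \<ge> 0 \<and>
           (\<forall>s. (\<exists>b\<in>B. le b s) \<longrightarrow> ff tr K T L s \<le> 1 - c * real (w s) powr (- k))"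
  using fin hb
proof (induction B rule: finite_induct)
  case empty
  show ?case by (intro exI[of _ "1::nat"] exI[of _ "1::real"] exI[of _ "0::real"]) auto
next
  case (insert b B)
  obtain L c k where Lck: "L > 0" "c > 0" "c \<le> 1" "k \<ge> 0"
    and bL: "\<And>s. (\<exists>b\<in>B. le b s) \<Longrightarrow> ff tr K T L s \<le> 1 - c * real (w s) powr (- k)"
    using insert by blast
  obtain n c' k' where nck: "c' > 0" "k' \<ge> 0"
    and bn: "\<And>s. le b s \<Longrightarrow> ff tr K T n s \<le> 1 - c' * real (w s) powr (- k')"
    using insert.prems by blast
  define L2 where "L2 = max L n"
  define c2 where "c2 = min c (min c' 1)"
  define k2 where "k2 = max k k'"
  have "ff tr K T L2 s \<le> 1 - c2 * real (w s) powr (- k2)" if "\<exists>b'\<in>insert b B. le b' s" for s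
  proof -
    have W1: "1 \<le> real (w s)" using wpos[of s] by simp
    have p2: "0 \<le> real (w s) powr (- k2)" by simp
    show ?thesis
    proof (cases "le b s")
      case True
      have "ff tr K T L2 s \<le> ff tr K T n s" by (rule ff_antimono) (simp add: L2_def)
      also have "\<dots> \<le> 1 - c' * real (w s) powr (- k')" by (rule bn[OF True])
      also have "c2 * real (w s) powr (- k2) \<le> c' * real (w s) powr (- k')"
        using nck Lck by (intro mult_mono powr_anti_exp W1) (auto simp: c2_def k2_def)
      then have "1 - c' * real (w s) powr (- k') \<le> 1 - c2 * real (w s) powr (- k2)" by simp
      finally show ?thesis .
    next
      case False
      then have ex: "\<exists>b\<in>B. le b s" using that by auto
      have "ff tr K T L2 s \<le> ff tr K T L s" by (rule ff_antimono) (simp add: L2_def)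
      also have "\<dots> \<le> 1 - c * real (w s) powr (- k)" by (rule bL[OF ex])
      also have "c2 * real (w s) powr (- k2) \<le> c * real (w s) powr (- k)"
        using nck Lck by (intro mult_mono powr_anti_exp W1) (auto simp: c2_def k2_def)
      then have "1 - c * real (w s) powr (- k) \<le> 1 - c2 * real (w s) powr (- k2)" by simp
      finally show ?thesis .
    qed
  qed
  moreover have "L2 > 0" "c2 > 0" "c2 \<le> 1" "k2 \<ge> 0"
    using Lck nck by (auto simp: L2_def c2_def k2_def)
  ultimately show ?case by blast
qed

theorem theorem4:
  fixes le tr :: "'a \<Rightarrow> 'a \<Rightarrow> bool" and w :: "'a \<Rightarrow> nat" and K :: "'a \<Rightarrow> 'a pmf"
    and T :: "'a set"
  assumes "closed_swsts le tr w K"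
    and "upward_closed le T"
  shows "\<exists>(k::nat) (C::real). \<forall>s. expected_tau tr K T s \<le> ennreal (C * real (w s) ^ k)"
proof -
  have wq: "wqo le" and comp: "compatible le tr" and wpos: "\<And>s. w s > 0"
    and supp: "\<And>s. set_pmf (K s) \<subseteq> {s'. tr s s'}"
    and Hp: "\<And>s s'. tr s s' \<Longrightarrow> (\<exists>k0 c0 :: real. k0 \<ge> 0 \<and> c0 > 0 \<and>
           (\<forall>t. le s t \<longrightarrow>
              measure_pmf.prob (K t) {u. le s' u} \<ge> c0 * real (w t) powr (- k0)))"
    and cl: "\<And>s s'. tr s s' \<Longrightarrow> w s = w s'"
    using assms(1) unfolding closed_swsts_def swsts_def wsts_def by blast+
  obtain B where B: "finite B" "B \<subseteq> Pred_star tr T" "\<forall>x\<in>Pred_star tr T. \<exists>b\<in>B. le b x"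
    using finite_basis[OF wq] by blast
  have hb: "\<forall>b\<in>B. \<exists>n (c::real) (k::real). c > 0 \<and> k \<ge> 0 \<and>
           (\<forall>s. le b s \<longrightarrow> ff tr K T n s \<le> 1 - c * real (w s) powr (- k))"
  proof
    fix b assume "b \<in> B"
    then obtain t where "t \<in> T" "tr\<^sup>*\<^sup>* b t" using B(2) unfolding Pred_star_def by blast
    then show "\<exists>n (c::real) (k::real). c > 0 \<and> k \<ge> 0 \<and>
           (\<forall>s. le b s \<longrightarrow> ff tr K T n s \<le> 1 - c * real (w s) powr (- k))"
      by (intro path_bound[OF supp cl wpos assms(2) Hp]) auto
  qed
  obtain L c k where Lck: "L > 0" "c > 0" "c \<le> 1" "k \<ge> 0"
    and bL: "\<And>s. (\<exists>b\<in>B. le b s) \<Longrightarrow> ff tr K T L s \<le> 1 - c * real (w s) powr (- k)"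
    using combine[OF B(1) wpos hb] by blast
  have all: "ff tr K T L s \<le> 1 - c * real (w s) powr (- k)" for s
  proof (cases "s \<in> Gset tr T")
    case True
    then show ?thesis using B(3) bL by (auto simp: Gset_def)
  next
    case False
    have W1: "1 \<le> real (w s)" using wpos[of s] by simp
    have "real (w s) powr (- k) \<le> real (w s) powr (- 0)"
      by (rule powr_anti_exp[OF W1 Lck(4)])
    then have "real (w s) powr (- k) \<le> 1" using wpos[of s] by simp
    then have "c * real (w s) powr (- k) \<le> 1" using Lck
      by (metis mult_le_one powr_ge_zero less_imp_le)
    then show ?thesis using False by (simp add: ff_notG)
  qed
  define kk where "kk = nat \<lceil>k\<rceil>"
  have "expected_tau tr K T s \<le> ennreal (real L / c * real (w s) ^ kk)" for s
  proof -
    define W where "W = real (w s)"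
    have W1: "1 \<le> W" using wpos[of s] by (simp add: W_def)
    define q where "q = c * W powr (- k)"
    have q0: "q > 0" using Lck W1 by (simp add: q_def)
    have q1: "q \<le> 1"
    proof -
      have "W powr (- k) \<le> W powr (- 0)" by (rule powr_anti_exp[OF W1 Lck(4)])
      then have "W powr (- k) \<le> 1" using W1 by simp
      then show ?thesis using Lck unfolding q_def by (metis mult_le_one powr_ge_zero less_imp_le)
    qed
    have "expected_tau tr K T s \<le> ennreal (real L / q)"
    proof (rule expected_bound)
      fix N
      show "(\<Sum>n<N. ff tr K T n s) \<le> real L / q"
      proof (rule ff_partial[OF supp cl q1 q0 Lck(1)])
        fix s' assume "w s' = w s"
        then show "ff tr K T L s' \<le> 1 - q" using all[of s'] by (simp add: q_def W_def)
      qed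
    qed
    also have "real L / q = real L / c * W powr k"
      using W1 Lck by (simp add: q_def powr_minus field_simps)
    also have "\<dots> \<le> real L / c * W ^ kk"
    proof -
      have "W powr k \<le> W powr real kk"
      proof -
        have "real kk = real_of_int \<lceil>k\<rceil>" using Lck(4) by (simp add: kk_def)
        then have "k \<le> real kk" by (simp add: le_of_int_ceiling)
        then show ?thesis using W1 by (intro powr_mono) auto
      qed
      also have "\<dots> = W ^ kk" using W1 by (simp add: powr_realpow)
      finally show ?thesis using Lck by (intro mult_left_mono) auto
    qed
    finally show ?thesis by (simp add: W_def ennreal_leI)
  qed
  then show ?thesis by blast
qed

end
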